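(* Consider two user types $k\in\{1,2\}$ (write $-k$ for the other type), with $N_k$ users of type $k$, individual arrival rate $\lambda_k$, departure rate $\mu_k$, and instantaneous utility of use $u_k(\tau)=\alpha_k-\beta_k/\tau$. Suppose the service provider uses TDMA, has no admission control (every arriving user is admitted), and offers the pricing policy $\mathbf P=(\phi,(p_s,q))$. When the other users play according to the profile $\pi=(\pi_1,\pi_2)$, $\pi_j=[\pi_{j,0},\pi_{j,1}]$, the expected utility of use and expected cost of a particular type-$k$ user playing $\pi_k'=[\pi_{k,0}',\pi_{k,1}']$ are $$U_k(\theta,\alpha,(\pi;\pi_k'))=\pi_{k,1}'\,\Delta T\,\frac{\lambda_k}{\lambda_k+\mu_k}\Big[\alpha_k-\beta_k\Big(1+\frac{\lambda_k(N_k-1)}{\lambda_k+\mu_k}\pi_{k,1}+\frac{\lambda_{-k}N_{-k}}{\lambda_{-k}+\mu_{-k}}\pi_{-k,1}\Big)\Big]$$ and $$C_k(\theta,\alpha,\mathbf P,(\pi;\pi_k'))=\pi_{k,1}'\big(p_s+q\,\hat B_k(\theta,\alpha,\pi)\big),$$ where $$\hat B_k(\theta,\alpha,\pi)=\sum_{n_{k,1}=1}^{N_k}\sum_{n_{-k,1}=0}^{N_{-k}}\binom{N_k-1}{n_{k,1}-1}\pi_{k,1}^{n_{k,1}-1}(1-\pi_{k,1})^{N_k-n_{k,1}}\binom{N_{-k}}{n_{-k,1}}\pi_{-k,1}^{n_{-k,1}}(1-\pi_{-k,1})^{N_{-k}-n_{-k,1}}B_k^1(\theta,\alpha,\mathbf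 n),$$ with $B_k^1(\theta,\alpha,\mathbf n)=\Delta T\sum_{\mathbf x}\Pr(\mathbf X(\infty)=\mathbf x)\frac{x_{k,1}}{n_{k,1}}\tau_{k,1}(\mathbf x)$ and $\tau_{k,1}(\mathbf x)=\frac{1}{x_{k,1}+x_{-k,1}}$.
   Context: Plan $0$ is the dummy plan $\phi$ (no subscription); plan $1$ charges subscription fee $p_s\ge0$ per billing period of length $\Delta T$ plus $q\ge0$ per unit of guaranteed data rate. Each type-$k$ user independently chooses plan $1$ with probability $\pi_{k,1}$ (the particular user with probability $\pi_{k,1}'$), fixed thereafter; the realization gives $n_{j,1}$ type-$j$ users on plan $1$ ($\mathbf n=(n_{1,1},n_{2,1})$). Given $\mathbf n$, each plan-1 user alternates: while offline it arrives after an exponential time of rate $\lambda_j$, while online it departs after an exponential time of rate $\mu_j$, independently; $\mathbf X(\infty)$ denotes the steady-state system state, with $x_{j,1}$ online type-$j$ plan-1 users. Under TDMA with normalized bandwidth $1$ the bandwidth is shared equally, so an online user's guaranteed throughput is $\tau(\mathbf x)=1/(x_{1,1}+x_{2,1})$. Definitions: $V_k^1(\mathbf n)=\Delta T\sum_{\mathbf x}\Pr(\mathbf X(\infty)=\mathbf x)\frac{x_{k,1}}{n_{k,1}}u_k(\tau(\mathbf x))$; $U_k(\theta,\alpha,(\pi;\pi_k'))=\pi_{k,1}'\sum_{\mathbf n:n_{k,1}\ge1}\Pr(\mathbf n\mid k,1)V_k^1(\mathbf n)$ and $C_k(\theta,\alpha,\mathbf P,(\pi;\pi_k'))=\pi_{k,1}'\big(p_s+\sum_{\mathbf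 n:n_{k,1}\ge1}\Pr(\mathbf n\mid k,1)\,q\,B_k^1(\theta,\alpha,\mathbf n)\big)$, where $\Pr(\mathbf n\mid k,1)$ is the probability of the realization $\mathbf n$ given that the particular user chose plan $1$ (the other users choosing independently according to $\pi$). *)

theory Defs
  imports "HOL-Probability.Probability_Mass_Function"
begin

(* User types are indexed by the naturals 1 and 2; the other type of k is 3 - k. *)
definition oth :: "nat \<Rightarrow> nat" where "oth k = 3 - k"

(* Pairs (a,b) always store the type-1 component first and the type-2 component second. *)
definition comp :: "nat \<Rightarrow> nat \<times> nat \<Rightarrow> nat" where
  "comp k z = (if k = 1 then fst z else snd z)"

definition mkp :: "nat \<Rightarrow> nat \<Rightarrow> nat \<Rightarrow> nat \<times> nat" where
  "mkp k a b = (if k = 1 then (a, b) else (b, a))"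

(* state space of X given n = (n_{1,1}, n_{2,1}) *)
definition states :: "nat \<times> nat \<Rightarrow> (nat \<times> nat) set" where
  "states n = {0..fst n} \<times> {0..snd n}"

(* transition rate from x to y of the CTMC: each offline plan-1 user of type j
   comes online at rate lambda_j, each online one leaves at rate mu_j *)
definition rate :: "(nat \<Rightarrow> real) \<Rightarrow> (nat \<Rightarrow> real) \<Rightarrow> nat \<times> nat \<Rightarrow> nat \<times> nat \<Rightarrow> nat \<times> nat \<Rightarrow> real" where
  "rate lam mu n x y =
     (if fst y = fst x + 1 \<and> snd y = snd x then real (fst n - fst x) * lam 1 else 0)
   + (if fst x = fst y + 1 \<and> snd y = snd x then real (fst x) * mu 1 else 0)
   + (if snd y = snd x + 1 \<and> fst y = fst x then real (snd n - snd x) * lam 2 else 0)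
   + (if snd x = snd y + 1 \<and> fst y = fst x then real (snd x) * mu 2 else 0)"

(* p is a steady-state (stationary) distribution of the chain given n: Pr(X(\<infinity>) = x) = p x *)
definition stationary :: "(nat \<Rightarrow> real) \<Rightarrow> (nat \<Rightarrow> real) \<Rightarrow> nat \<times> nat \<Rightarrow> (nat \<times> nat \<Rightarrow> real) \<Rightarrow> bool" where
  "stationary lam mu n p \<longleftrightarrow>
     (\<forall>x. 0 \<le> p x) \<and> (\<forall>x. x \<notin> states n \<longrightarrow> p x = 0) \<and> (\<Sum>x\<in>states n. p x) = 1 \<and>
     (\<forall>x\<in>states n. p x * (\<Sum>y\<in>states n. rate lam mu n x y)
                    = (\<Sum>y\<in>states n. p y * rate lam mu n y x))"

definition tau :: "nat \<times> nat \<Rightarrow> real" where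
  "tau x = 1 / real (fst x + snd x)"

definition util :: "(nat \<Rightarrow> real) \<Rightarrow> (nat \<Rightarrow> real) \<Rightarrow> nat \<Rightarrow> real \<Rightarrow> real" where
  "util al be k t = al k - be k / t"

(* Pr(n | k,1): the particular type-k user is on plan 1, the others choose independently *)
definition cond_n :: "(nat \<Rightarrow> nat) \<Rightarrow> (nat \<Rightarrow> real) \<Rightarrow> nat \<Rightarrow> (nat \<times> nat) pmf" where
  "cond_n N pr k =
     (if k = 1 then pair_pmf (map_pmf Suc (binomial_pmf (N 1 - 1) (pr 1))) (binomial_pmf (N 2) (pr 2))
      else pair_pmf (binomial_pmf (N 1) (pr 1)) (map_pmf Suc (binomial_pmf (N 2 - 1) (pr 2))))"

definition nset :: "(nat \<Rightarrow> nat) \<Rightarrow> nat \<Rightarrow> (nat \<times> nat) set" where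
  "nset N k = {n \<in> {0..N 1} \<times> {0..N 2}. 1 \<le> comp k n}"

definition V1 :: "real \<Rightarrow> (nat \<Rightarrow> real) \<Rightarrow> (nat \<Rightarrow> real) \<Rightarrow> (nat \<times> nat \<Rightarrow> nat \<times> nat \<Rightarrow> real)
                  \<Rightarrow> nat \<Rightarrow> nat \<times> nat \<Rightarrow> real" where
  "V1 dT al be P k n = dT * (\<Sum>x\<in>states n. P n x * (real (comp k x) / real (comp k n)) * util al be k (tau x))"

definition B1 :: "real \<Rightarrow> (nat \<times> nat \<Rightarrow> nat \<times> nat \<Rightarrow> real) \<Rightarrow> nat \<Rightarrow> nat \<times> nat \<Rightarrow> real" where
  "B1 dT P k n = dT * (\<Sum>x\<in>states n. P n x * (real (comp k x) / real (comp k n)) * tau x)"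

definition Uk :: "real \<Rightarrow> (nat \<Rightarrow> nat) \<Rightarrow> (nat \<Rightarrow> real) \<Rightarrow> (nat \<Rightarrow> real) \<Rightarrow>
                  (nat \<times> nat \<Rightarrow> nat \<times> nat \<Rightarrow> real) \<Rightarrow> (nat \<Rightarrow> real) \<Rightarrow> real \<Rightarrow> nat \<Rightarrow> real" where
  "Uk dT N al be P pr pi' k = pi' * (\<Sum>n\<in>nset N k. pmf (cond_n N pr k) n * V1 dT al be P k n)"

definition Ck :: "real \<Rightarrow> (nat \<Rightarrow> nat) \<Rightarrow> (nat \<times> nat \<Rightarrow> nat \<times> nat \<Rightarrow> real) \<Rightarrow> real \<Rightarrow> real \<Rightarrow>
                  (nat \<Rightarrow> real) \<Rightarrow> real \<Rightarrow> nat \<Rightarrow> real" where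
  "Ck dT N P ps q pr pi' k = pi' * (ps + (\<Sum>n\<in>nset N k. pmf (cond_n N pr k) n * q * B1 dT P k n))"

definition Bhat :: "real \<Rightarrow> (nat \<Rightarrow> nat) \<Rightarrow> (nat \<times> nat \<Rightarrow> nat \<times> nat \<Rightarrow> real) \<Rightarrow> (nat \<Rightarrow> real) \<Rightarrow> nat \<Rightarrow> real" where
  "Bhat dT N P pr k =
     (\<Sum>a=1..N k. \<Sum>b=0..N (oth k).
        real ((N k - 1) choose (a - 1)) * pr k ^ (a - 1) * (1 - pr k) ^ (N k - a)
      * real (N (oth k) choose b) * pr (oth k) ^ b * (1 - pr (oth k)) ^ (N (oth k) - b)
      * B1 dT P k (mkp k a b))"

end

theory Submission
  imports Defs
begin

lemma gen:
  assumes st: "stationary lam mu n p"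
  shows "(\<Sum>x\<in>states n. p x * (\<Sum>y\<in>states n. rate lam mu n x y * (f y - f x))) = 0"
proof -
  let ?S = "states n" and ?r = "rate lam mu n"
  have fin: "finite ?S" by (simp add: states_def)
  have bal: "\<forall>x\<in>?S. p x * (\<Sum>y\<in>?S. ?r x y) = (\<Sum>y\<in>?S. p y * ?r y x)"
    using st by (simp add: stationary_def)
  have "(\<Sum>x\<in>?S. p x * (\<Sum>y\<in>?S. ?r x y * (f y - f x)))
      = (\<Sum>x\<in>?S. \<Sum>y\<in>?S. p x * ?r x y * f y) - (\<Sum>x\<in>?S. f x * (p x * (\<Sum>y\<in>?S. ?r x y)))"
    by (simp add: sum_distrib_left sum_subtractf algebra_simps)
  also have "(\<Sum>x\<in>?S. f x * (p x * (\<Sum>y\<in>?S. ?r x y))) = (\<Sum>x\<in>?S. \<Sum>y\<in>?S. f x * (p y * ?r y x))"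
    using bal by (simp add: sum_distrib_left)
  also have "\<dots> = (\<Sum>y\<in>?S. \<Sum>x\<in>?S. f x * (p y * ?r y x))"
    by (rule sum.swap)
  finally show ?thesis by (simp add: algebra_simps)
qed

lemma sdelta:
  fixes c :: real
  assumes "finite S" "\<And>y. P y \<longleftrightarrow> y = t"
  shows "(\<Sum>y\<in>S. (if P y then c else 0) * g y) = (if t \<in> S then c * g t else 0)"
proof -
  have "(\<Sum>y\<in>S. (if P y then c else 0) * g y) = (\<Sum>y\<in>S. if y = t then c * g y else 0)"
    using assms(2) by (intro sum.cong) auto
  also have "\<dots> = (if t \<in> S then c * g t else 0)" using assms(1) by (simp add: sum.delta)
  finally show ?thesis .
qed

lemma drift:
  assumes x: "x \<in> states n"
  shows "(\<Sum>y\<in>states n. rate lam mu n x y * (f y - f x)) =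
     real (fst n - fst x) * lam 1 * (f (fst x + 1, snd x) - f x)
   + real (fst x) * mu 1 * (f (fst x - 1, snd x) - f x)
   + real (snd n - snd x) * lam 2 * (f (fst x, snd x + 1) - f x)
   + real (snd x) * mu 2 * (f (fst x, snd x - 1) - f x)"
proof -
  obtain a b where xe: "x = (a,b)" by (cases x)
  obtain n1 n2 where ne: "n = (n1,n2)" by (cases n)
  have ab: "a \<le> n1" "b \<le> n2" using x by (auto simp: xe ne states_def)
  have fin: "finite (states n)" by (simp add: states_def)
  let ?g = "\<lambda>y. f y - f x"
  have t1: "(\<Sum>y\<in>states n. (if fst y = a + 1 \<and> snd y = b then real (n1 - a) * lam 1 else 0) * ?g y)
     = real (n1 - a) * lam 1 * ?g (a+1, b)"
    by (subst sdelta[OF fin, of _ "(a+1,b)"]) (use ab in \<open>auto simp: states_def ne\<close>)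
  have t2: "(\<Sum>y\<in>states n. (if a = fst y + 1 \<and> snd y = b then real a * mu 1 else 0) * ?g y)
     = real a * mu 1 * ?g (a-1, b)"
  proof (cases a)
    case 0 then show ?thesis by simp
  next
    case (Suc a') then show ?thesis
      using ab by (subst sdelta[OF fin, of _ "(a',b)"]) (use ab in \<open>auto simp: states_def ne\<close>)
  qed
  have t3: "(\<Sum>y\<in>states n. (if snd y = b + 1 \<and> fst y = a then real (n2 - b) * lam 2 else 0) * ?g y)
     = real (n2 - b) * lam 2 * ?g (a, b+1)"
    by (subst sdelta[OF fin, of _ "(a,b+1)"]) (use ab in \<open>auto simp: states_def ne\<close>)
  have t4: "(\<Sum>y\<in>states n. (if b = snd y + 1 \<and> fst y = a then real b * mu 2 else 0) * ?g y)
     = real b * mu 2 * ?g (a, b-1)"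
  proof (cases b)
    case 0 then show ?thesis by simp
  next
    case (Suc b') then show ?thesis
      using ab by (subst sdelta[OF fin, of _ "(a,b')"]) (use ab in \<open>auto simp: states_def ne\<close>)
  qed
  have "(\<Sum>y\<in>states n. rate lam mu n x y * ?g y) =
     (\<Sum>y\<in>states n. (if fst y = a + 1 \<and> snd y = b then real (n1 - a) * lam 1 else 0) * ?g y)
   + (\<Sum>y\<in>states n. (if a = fst y + 1 \<and> snd y = b then real a * mu 1 else 0) * ?g y)
   + (\<Sum>y\<in>states n. (if snd y = b + 1 \<and> fst y = a then real (n2 - b) * lam 2 else 0) * ?g y)
   + (\<Sum>y\<in>states n. (if b = snd y + 1 \<and> fst y = a then real b * mu 2 else 0) * ?g y)"
    unfolding rate_def xe ne fst_conv snd_conv by (simp only: distrib_right sum.distrib)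
  then show ?thesis using t1 t2 t3 t4 by (simp add: xe ne)
qed


lemma lincomb:
  "(\<Sum>x\<in>S. p x * (c0 + c1 * real (fst x) + c2 * real (snd x) + c3 * real (fst x)^2
      + c4 * real (snd x)^2 + c5 * (real (fst x) * real (snd x))))
   = c0 * (\<Sum>x\<in>S. p x) + c1 * (\<Sum>x\<in>S. p x * real (fst x)) + c2 * (\<Sum>x\<in>S. p x * real (snd x))
     + c3 * (\<Sum>x\<in>S. p x * real (fst x)^2) + c4 * (\<Sum>x\<in>S. p x * real (snd x)^2)
     + c5 * (\<Sum>x\<in>S. p x * (real (fst x) * real (snd x)))"
  by (simp add: sum.distrib sum_distrib_left algebra_simps)

lemma gen2:
  assumes st: "stationary lam mu n p"
  and D: "\<And>x. x \<in> states n \<Longrightarrow>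
     real (fst n - fst x) * lam 1 * (f (fst x + 1, snd x) - f x)
   + real (fst x) * mu 1 * (f (fst x - 1, snd x) - f x)
   + real (snd n - snd x) * lam 2 * (f (fst x, snd x + 1) - f x)
   + real (snd x) * mu 2 * (f (fst x, snd x - 1) - f x) = (c0 + c1 * real (fst x) + c2 * real (snd x) + c3 * real (fst x)^2
      + c4 * real (snd x)^2 + c5 * (real (fst x) * real (snd x)))"
  shows "c0 * (\<Sum>x\<in>states n. p x) + c1 * (\<Sum>x\<in>states n. p x * real (fst x)) + c2 * (\<Sum>x\<in>states n. p x * real (snd x))
     + c3 * (\<Sum>x\<in>states n. p x * real (fst x)^2) + c4 * (\<Sum>x\<in>states n. p x * real (snd x)^2)
     + c5 * (\<Sum>x\<in>states n. p x * (real (fst x) * real (snd x))) = 0"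
proof -
  have "(\<Sum>x\<in>states n. p x * (\<Sum>y\<in>states n. rate lam mu n x y * (f y - f x))) = 0"
    by (rule gen[OF st])
  also have "(\<Sum>x\<in>states n. p x * (\<Sum>y\<in>states n. rate lam mu n x y * (f y - f x)))
     = (\<Sum>x\<in>states n. p x * (c0 + c1 * real (fst x) + c2 * real (snd x) + c3 * real (fst x)^2
      + c4 * real (snd x)^2 + c5 * (real (fst x) * real (snd x))))"
  proof (intro sum.cong refl)
    fix x assume x: "x \<in> states n"
    show "p x * (\<Sum>y\<in>states n. rate lam mu n x y * (f y - f x)) = p x * (c0 + c1 * real (fst x) + c2 * real (snd x) + c3 * real (fst x)^2
      + c4 * real (snd x)^2 + c5 * (real (fst x) * real (snd x)))"
      by (simp only: drift[OF x] D[OF x])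
  qed
  finally show ?thesis by (simp only: lincomb)
qed

lemma inS: "x \<in> states n \<Longrightarrow> fst x \<le> fst n \<and> snd x \<le> snd n"
  by (auto simp: states_def)

lemma moments:
  assumes st: "stationary lam mu n p"
  and pos: "0 < lam 1" "0 < mu 1" "0 < lam 2" "0 < mu 2"
  defines "s1 \<equiv> lam 1 + mu 1" and "s2 \<equiv> lam 2 + mu 2"
  defines "Ma \<equiv> (\<Sum>x\<in>states n. p x * real (fst x))" and "Mb \<equiv> (\<Sum>x\<in>states n. p x * real (snd x))"
  defines "Maa \<equiv> (\<Sum>x\<in>states n. p x * real (fst x)^2)" and "Mbb \<equiv> (\<Sum>x\<in>states n. p x * real (snd x)^2)"
  defines "Mab \<equiv> (\<Sum>x\<in>states n. p x * (real (fst x) * real (snd x)))"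
  shows "Ma = real (fst n) * lam 1 / s1" "Mb = real (snd n) * lam 2 / s2"
    "Maa = (lam 1 * real (fst n) + (2 * real (fst n) * lam 1 - lam 1 + mu 1) * Ma) / (2 * s1)"
    "Mbb = (lam 2 * real (snd n) + (2 * real (snd n) * lam 2 - lam 2 + mu 2) * Mb) / (2 * s2)"
    "Mab = (lam 1 * real (fst n) * Mb + lam 2 * real (snd n) * Ma) / (s1 + s2)"
proof -
  have one: "(\<Sum>x\<in>states n. p x) = 1" using st by (simp add: stationary_def)
  have "real (fst n) * lam 1 * 1 + (- s1) * Ma + 0 * Mb + 0 * Maa + 0 * Mbb + 0 * Mab = 0"
    unfolding Ma_def Mb_def Maa_def Mbb_def Mab_def one[symmetric]
    by (rule gen2[OF st, where f = "\<lambda>z. real (fst z)"])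
       (auto dest!: inS simp: of_nat_diff s1_def algebra_simps split: nat_diff_split)
  then show A: "Ma = real (fst n) * lam 1 / s1" using pos unfolding s1_def by (simp add: field_simps)
  have "real (snd n) * lam 2 * 1 + 0 * Ma + (- s2) * Mb + 0 * Maa + 0 * Mbb + 0 * Mab = 0"
    unfolding Ma_def Mb_def Maa_def Mbb_def Mab_def one[symmetric]
    by (rule gen2[OF st, where f = "\<lambda>z. real (snd z)"])
       (auto dest!: inS simp: of_nat_diff s2_def algebra_simps split: nat_diff_split)
  then show B: "Mb = real (snd n) * lam 2 / s2" using pos unfolding s2_def by (simp add: field_simps)
  have "lam 1 * real (fst n) * 1 + (2 * real (fst n) * lam 1 - lam 1 + mu 1) * Ma + 0 * Mb + (- 2 * s1) * Maa + 0 * Mbb + 0 * Mab = 0"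
    unfolding Ma_def Mb_def Maa_def Mbb_def Mab_def one[symmetric]
  proof (rule gen2[OF st, where f = "\<lambda>z. real (fst z)^2"])
    fix x assume "x \<in> states n"
    then have le: "fst x \<le> fst n" by (auto dest: inS)
    show "real (fst n - fst x) * lam 1 * ((\<lambda>z. real (fst z)^2) (fst x + 1, snd x) - (\<lambda>z. real (fst z)^2) x) +
        real (fst x) * mu 1 * ((\<lambda>z. real (fst z)^2) (fst x - 1, snd x) - (\<lambda>z. real (fst z)^2) x) +
        real (snd n - snd x) * lam 2 * ((\<lambda>z. real (fst z)^2) (fst x, snd x + 1) - (\<lambda>z. real (fst z)^2) x) +
        real (snd x) * mu 2 * ((\<lambda>z. real (fst z)^2) (fst x, snd x - 1) - (\<lambda>z. real (fst z)^2) x) =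
        lam 1 * real (fst n) + (2 * real (fst n) * lam 1 - lam 1 + mu 1) * real (fst x) + 0 * real (snd x) +
        - 2 * s1 * (real (fst x))\<^sup>2 + 0 * (real (snd x))\<^sup>2 + 0 * (real (fst x) * real (snd x))"
    proof (cases "fst x")
      case 0 then show ?thesis using le by (simp add: of_nat_diff s1_def algebra_simps power2_eq_square)
    next
      case (Suc m) then show ?thesis using le by (simp add: of_nat_diff s1_def algebra_simps power2_eq_square)
    qed
  qed
  then show "Maa = (lam 1 * real (fst n) + (2 * real (fst n) * lam 1 - lam 1 + mu 1) * Ma) / (2 * s1)"
    using pos unfolding s1_def by (simp add: field_simps)
  have "lam 2 * real (snd n) * 1 + 0 * Ma + (2 * real (snd n) * lam 2 - lam 2 + mu 2) * Mb + 0 * Maa + (- 2 * s2) * Mbb + 0 * Mab = 0"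
    unfolding Ma_def Mb_def Maa_def Mbb_def Mab_def one[symmetric]
  proof (rule gen2[OF st, where f = "\<lambda>z. real (snd z)^2"])
    fix x assume "x \<in> states n"
    then have le: "snd x \<le> snd n" by (auto dest: inS)
    show "real (fst n - fst x) * lam 1 * ((\<lambda>z. real (snd z)^2) (fst x + 1, snd x) - (\<lambda>z. real (snd z)^2) x) +
        real (fst x) * mu 1 * ((\<lambda>z. real (snd z)^2) (fst x - 1, snd x) - (\<lambda>z. real (snd z)^2) x) +
        real (snd n - snd x) * lam 2 * ((\<lambda>z. real (snd z)^2) (fst x, snd x + 1) - (\<lambda>z. real (snd z)^2) x) +
        real (snd x) * mu 2 * ((\<lambda>z. real (snd z)^2) (fst x, snd x - 1) - (\<lambda>z. real (snd z)^2) x) =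
        lam 2 * real (snd n) + 0 * real (fst x) + (2 * real (snd n) * lam 2 - lam 2 + mu 2) * real (snd x) +
        0 * (real (fst x))\<^sup>2 + - 2 * s2 * (real (snd x))\<^sup>2 + 0 * (real (fst x) * real (snd x))"
    proof (cases "snd x")
      case 0 then show ?thesis using le by (simp add: of_nat_diff s2_def algebra_simps power2_eq_square)
    next
      case (Suc m) then show ?thesis using le by (simp add: of_nat_diff s2_def algebra_simps power2_eq_square)
    qed
  qed
  then show "Mbb = (lam 2 * real (snd n) + (2 * real (snd n) * lam 2 - lam 2 + mu 2) * Mb) / (2 * s2)"
    using pos unfolding s2_def by (simp add: field_simps)
  have "0 * 1 + lam 2 * real (snd n) * Ma + lam 1 * real (fst n) * Mb + 0 * Maa + 0 * Mbb + (- (s1 + s2)) * Mab = 0"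
    unfolding Ma_def Mb_def Maa_def Mbb_def Mab_def one[symmetric]
  proof (rule gen2[OF st, where f = "\<lambda>z. real (fst z) * real (snd z)"])
    fix x assume "x \<in> states n"
    then have le: "fst x \<le> fst n" "snd x \<le> snd n" by (auto dest: inS)
    show "real (fst n - fst x) * lam 1 * ((\<lambda>z. real (fst z) * real (snd z)) (fst x + 1, snd x) - (\<lambda>z. real (fst z) * real (snd z)) x) +
        real (fst x) * mu 1 * ((\<lambda>z. real (fst z) * real (snd z)) (fst x - 1, snd x) - (\<lambda>z. real (fst z) * real (snd z)) x) +
        real (snd n - snd x) * lam 2 * ((\<lambda>z. real (fst z) * real (snd z)) (fst x, snd x + 1) - (\<lambda>z. real (fst z) * real (snd z)) x) +
        real (snd x) * mu 2 * ((\<lambda>z. real (fst z) * real (snd z)) (fst x, snd x - 1) - (\<lambda>z. real (fst z) * real (snd z)) x) =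
        0 + lam 2 * real (snd n) * real (fst x) + lam 1 * real (fst n) * real (snd x) +
        0 * (real (fst x))\<^sup>2 + 0 * (real (snd x))\<^sup>2 + - (s1 + s2) * (real (fst x) * real (snd x))"
    proof (cases "fst x"; cases "snd x")
    qed (use le in \<open>simp_all add: of_nat_diff s1_def s2_def algebra_simps\<close>)
  qed
  then show "Mab = (lam 1 * real (fst n) * Mb + lam 2 * real (snd n) * Ma) / (s1 + s2)"
    using pos unfolding s1_def s2_def by (simp add: field_simps)
qed


lemma util_pt: "real a * util al be k (tau (a, b)) = al k * real a - be k * (real a ^ 2 + real a * real b)"
  by (cases "a + b = 0") (auto simp: util_def tau_def power2_eq_square algebra_simps)

lemma V1_1:
  assumes st: "stationary lam mu n (P n)"
  and pos: "0 < lam 1" "0 < mu 1" "0 < lam 2" "0 < mu 2"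
  and n1: "1 \<le> fst n"
  shows "V1 dT al be P 1 n = dT * (lam 1 / (lam 1 + mu 1)) *
     (al 1 - be 1 * (1 + lam 1 * (real (fst n) - 1) / (lam 1 + mu 1) + lam 2 * real (snd n) / (lam 2 + mu 2)))"
proof -
  let ?p = "P n"
  have "V1 dT al be P 1 n = dT * (\<Sum>x\<in>states n. ?p x * (0 + (al 1 / real (fst n)) * real (fst x) + 0 * real (snd x)
      + (- be 1 / real (fst n)) * real (fst x)^2 + 0 * real (snd x)^2 + (- be 1 / real (fst n)) * (real (fst x) * real (snd x))))"
    unfolding V1_def comp_def if_P[OF refl]
  proof (intro arg_cong[where f = "\<lambda>s. dT * s"] sum.cong refl)
    fix x :: "nat \<times> nat"
    obtain a b where x: "x = (a,b)" by (cases x)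
    have "?p x * (real (fst x) / real (fst n)) * util al be 1 (tau x) = ?p x * (real a * util al be 1 (tau (a,b))) / real (fst n)"
      by (simp add: x)
    also have "\<dots> = ?p x * (al 1 * real a - be 1 * (real a ^ 2 + real a * real b)) / real (fst n)"
      by (simp only: util_pt)
    also have "\<dots> = ?p x * (0 + (al 1 / real (fst n)) * real (fst x) + 0 * real (snd x)
      + (- be 1 / real (fst n)) * real (fst x)^2 + 0 * real (snd x)^2 + (- be 1 / real (fst n)) * (real (fst x) * real (snd x)))"
      using n1 by (simp add: x field_simps)
    finally show "?p x * (real (fst x) / real (fst n)) * util al be 1 (tau x) = ?p x * (0 + (al 1 / real (fst n)) * real (fst x) + 0 * real (snd x)
      + (- be 1 / real (fst n)) * real (fst x)^2 + 0 * real (snd x)^2 + (- be 1 / real (fst n)) * (real (fst x) * real (snd x)))" .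
  qed
  also have "\<dots> = dT * ((al 1 / real (fst n)) * (\<Sum>x\<in>states n. ?p x * real (fst x))
      - (be 1 / real (fst n)) * (\<Sum>x\<in>states n. ?p x * real (fst x)^2)
      - (be 1 / real (fst n)) * (\<Sum>x\<in>states n. ?p x * (real (fst x) * real (snd x))))"
    by (simp only: lincomb) (simp add: algebra_simps)
  also have "\<dots> = dT * (lam 1 / (lam 1 + mu 1)) *
     (al 1 - be 1 * (1 + lam 1 * (real (fst n) - 1) / (lam 1 + mu 1) + lam 2 * real (snd n) / (lam 2 + mu 2)))"
  proof -
    define s1 where "s1 = lam 1 + mu 1"
    define s2 where "s2 = lam 2 + mu 2"
    have s1: "s1 > 0" and s2: "s2 > 0" using pos by (auto simp: s1_def s2_def)
    have nz: "real (fst n) \<noteq> 0" using n1 by simp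
    have Ma: "(\<Sum>x\<in>states n. ?p x * real (fst x)) = real (fst n) * lam 1 / s1"
      using moments(1)[OF st pos] by (simp add: s1_def)
    have Mb: "(\<Sum>x\<in>states n. ?p x * real (snd x)) = real (snd n) * lam 2 / s2"
      using moments(2)[OF st pos] by (simp add: s2_def)
    have Maa: "(\<Sum>x\<in>states n. ?p x * real (fst x)^2) = real (fst n) * lam 1 * (mu 1 + real (fst n) * lam 1) / s1^2"
      using moments(3)[OF st pos] s1 unfolding Ma s1_def[symmetric]
      by (simp add: field_simps power2_eq_square) (simp add: s1_def algebra_simps)
    have Mab: "(\<Sum>x\<in>states n. ?p x * (real (fst x) * real (snd x))) = real (fst n) * lam 1 * (real (snd n) * lam 2) / (s1 * s2)"
    proof -
      have "lam 1 * real (fst n) * (real (snd n) * lam 2 / s2) + lam 2 * real (snd n) * (real (fst n) * lam 1 / s1)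
         = real (fst n) * lam 1 * (real (snd n) * lam 2) / (s1 * s2) * (s1 + s2)"
        using s1 s2 by (simp add: field_simps)
      moreover have "s1 + s2 \<noteq> 0" using s1 s2 by simp
      ultimately show ?thesis using moments(5)[OF st pos] unfolding Ma Mb s1_def[symmetric] s2_def[symmetric]
        by simp
    qed
    have e1: "1 + lam 1 * (real (fst n) - 1) / (lam 1 + mu 1) = (mu 1 + real (fst n) * lam 1) / s1"
      using s1 by (simp add: s1_def field_simps)
    show ?thesis unfolding Ma Maa Mab e1 s1_def[symmetric] s2_def[symmetric]
      using s1 s2 nz by (simp add: field_simps power2_eq_square) (simp add: s1_def algebra_simps)
  qed
  finally show ?thesis .
qed


lemma util_pt2: "real b * util al be k (tau (a, b)) = al k * real b - be k * (real b ^ 2 + real a * real b)"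
  by (cases "a + b = 0") (auto simp: util_def tau_def power2_eq_square algebra_simps)

lemma V1_2:
  assumes st: "stationary lam mu n (P n)"
  and pos: "0 < lam 1" "0 < mu 1" "0 < lam 2" "0 < mu 2"
  and n2: "1 \<le> snd n"
  shows "V1 dT al be P 2 n = dT * (lam 2 / (lam 2 + mu 2)) *
     (al 2 - be 2 * (1 + lam 2 * (real (snd n) - 1) / (lam 2 + mu 2) + lam 1 * real (fst n) / (lam 1 + mu 1)))"
proof -
  let ?p = "P n"
  have c2: "(if (2::nat) = 1 then u else v) = v" for u v :: nat by simp
  have "V1 dT al be P 2 n = dT * (\<Sum>x\<in>states n. ?p x * (0 + 0 * real (fst x) + (al 2 / real (snd n)) * real (snd x)
      + 0 * real (fst x)^2 + (- be 2 / real (snd n)) * real (snd x)^2 + (- be 2 / real (snd n)) * (real (fst x) * real (snd x))))"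
    unfolding V1_def comp_def c2
  proof (intro arg_cong[where f = "\<lambda>s. dT * s"] sum.cong refl)
    fix x :: "nat \<times> nat"
    obtain a b where x: "x = (a,b)" by (cases x)
    have "?p x * (real (snd x) / real (snd n)) * util al be 2 (tau x) = ?p x * (real b * util al be 2 (tau (a,b))) / real (snd n)"
      by (simp add: x)
    also have "\<dots> = ?p x * (al 2 * real b - be 2 * (real b ^ 2 + real a * real b)) / real (snd n)"
      by (simp only: util_pt2)
    also have "\<dots> = ?p x * (0 + 0 * real (fst x) + (al 2 / real (snd n)) * real (snd x)
      + 0 * real (fst x)^2 + (- be 2 / real (snd n)) * real (snd x)^2 + (- be 2 / real (snd n)) * (real (fst x) * real (snd x)))"
      using n2 by (simp add: x field_simps)
    finally show "?p x * (real (snd x) / real (snd n)) * util al be 2 (tau x) = ?p x * (0 + 0 * real (fst x) + (al 2 / real (snd n)) * real (snd x)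
      + 0 * real (fst x)^2 + (- be 2 / real (snd n)) * real (snd x)^2 + (- be 2 / real (snd n)) * (real (fst x) * real (snd x)))" .
  qed
  also have "\<dots> = dT * ((al 2 / real (snd n)) * (\<Sum>x\<in>states n. ?p x * real (snd x))
      - (be 2 / real (snd n)) * (\<Sum>x\<in>states n. ?p x * real (snd x)^2)
      - (be 2 / real (snd n)) * (\<Sum>x\<in>states n. ?p x * (real (fst x) * real (snd x))))"
    by (simp only: lincomb) (simp add: algebra_simps)
  also have "\<dots> = dT * (lam 2 / (lam 2 + mu 2)) *
     (al 2 - be 2 * (1 + lam 2 * (real (snd n) - 1) / (lam 2 + mu 2) + lam 1 * real (fst n) / (lam 1 + mu 1)))"
  proof -
    define s1 where "s1 = lam 1 + mu 1"
    define s2 where "s2 = lam 2 + mu 2"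
    have s1: "s1 > 0" and s2: "s2 > 0" using pos by (auto simp: s1_def s2_def)
    have nz: "real (snd n) \<noteq> 0" using n2 by simp
    have Ma: "(\<Sum>x\<in>states n. ?p x * real (fst x)) = real (fst n) * lam 1 / s1"
      using moments(1)[OF st pos] by (simp add: s1_def)
    have Mb: "(\<Sum>x\<in>states n. ?p x * real (snd x)) = real (snd n) * lam 2 / s2"
      using moments(2)[OF st pos] by (simp add: s2_def)
    have Mbb: "(\<Sum>x\<in>states n. ?p x * real (snd x)^2) = real (snd n) * lam 2 * (mu 2 + real (snd n) * lam 2) / s2^2"
      using moments(4)[OF st pos] s2 unfolding Mb s2_def[symmetric]
      by (simp add: field_simps power2_eq_square) (simp add: s2_def algebra_simps)
    have Mab: "(\<Sum>x\<in>states n. ?p x * (real (fst x) * real (snd x))) = real (fst n) * lam 1 * (real (snd n) * lam 2) / (s1 * s2)"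
    proof -
      have "lam 1 * real (fst n) * (real (snd n) * lam 2 / s2) + lam 2 * real (snd n) * (real (fst n) * lam 1 / s1)
         = real (fst n) * lam 1 * (real (snd n) * lam 2) / (s1 * s2) * (s1 + s2)"
        using s1 s2 by (simp add: field_simps)
      moreover have "s1 + s2 \<noteq> 0" using s1 s2 by simp
      ultimately show ?thesis using moments(5)[OF st pos] unfolding Ma Mb s1_def[symmetric] s2_def[symmetric]
        by simp
    qed
    have e1: "1 + lam 2 * (real (snd n) - 1) / (lam 2 + mu 2) = (mu 2 + real (snd n) * lam 2) / s2"
      using s2 by (simp add: s2_def field_simps)
    show ?thesis unfolding Mb Mbb Mab e1 s1_def[symmetric] s2_def[symmetric]
      using s1 s2 nz by (simp add: field_simps power2_eq_square) (simp add: s2_def algebra_simps)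
  qed
  finally show ?thesis .
qed

lemma bin_sum1: "(\<Sum>j\<le>m. real (m choose j) * p^j * (1-p)^(m-j)) = (1::real)"
proof -
  have "(\<Sum>j\<le>m. real (m choose j) * p^j * (1-p)^(m-j)) = (p + (1 - p))^m"
    by (subst binomial_ring) (simp add: atLeast0AtMost)
  then show ?thesis by simp
qed

lemma bin_mean: "(\<Sum>j\<le>m. real (m choose j) * p^j * (1-p)^(m-j) * real j) = real m * (p::real)"
proof (cases m)
  case 0 then show ?thesis by simp
next
  case (Suc m')
  have "(\<Sum>j\<le>Suc m'. real (Suc m' choose j) * p^j * (1-p)^(Suc m'-j) * real j)
      = (\<Sum>j\<le>m'. real (Suc m' choose Suc j) * p^Suc j * (1-p)^(Suc m'- Suc j) * real (Suc j))"
    by (subst sum.atMost_Suc_shift) simp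
  also have "\<dots> = (\<Sum>j\<le>m'. real (Suc m') * p * (real (m' choose j) * p^j * (1-p)^(m'-j)))"
  proof (intro sum.cong refl)
    fix j
    have "real (Suc m' choose Suc j) * real (Suc j) = real (Suc m') * real (m' choose j)"
      using Suc_times_binomial[of j m'] by (metis mult.commute of_nat_mult)
    note eq = this
    have "real (Suc m' choose Suc j) * p^Suc j * (1-p)^(Suc m'- Suc j) * real (Suc j)
      = (real (Suc m' choose Suc j) * real (Suc j)) * (p * (p^j * (1-p)^(m'-j)))"
      by (simp only: power_Suc diff_Suc_Suc ac_simps)
    also have "\<dots> = real (Suc m') * real (m' choose j) * (p * (p^j * (1-p)^(m'-j)))"
      by (simp only: eq)
    also have "\<dots> = real (Suc m') * p * (real (m' choose j) * p^j * (1-p)^(m'-j))"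
      by (simp only: ac_simps)
    finally show "real (Suc m' choose Suc j) * p^Suc j * (1-p)^(Suc m'- Suc j) * real (Suc j)
      = real (Suc m') * p * (real (m' choose j) * p^j * (1-p)^(m'-j))" .
  qed
  also have "\<dots> = real (Suc m') * p" by (simp add: sum_distrib_left[symmetric] bin_sum1)
  finally show ?thesis using Suc by simp
qed

lemma bin_lin:
  "(\<Sum>j\<le>m1. \<Sum>b\<le>m2. real (m1 choose j) * p1^j * (1-p1)^(m1-j) * (real (m2 choose b) * p2^b * (1-p2)^(m2-b))
      * (c0 + c1 * real j + c2 * real b)) = c0 + c1 * (real m1 * p1) + c2 * (real m2 * (p2::real))"
proof -
  let ?w1 = "\<lambda>j. real (m1 choose j) * p1^j * (1-p1)^(m1-j)"
  let ?w2 = "\<lambda>b. real (m2 choose b) * p2^b * (1-p2)^(m2-b)"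
  have inner: "\<And>j. (\<Sum>b\<le>m2. ?w1 j * ?w2 b * (c0 + c1 * real j + c2 * real b))
      = ?w1 j * (c0 + c1 * real j) + ?w1 j * (c2 * (real m2 * p2))"
  proof -
    fix j
    have "(\<Sum>b\<le>m2. ?w1 j * ?w2 b * (c0 + c1 * real j + c2 * real b))
      = ?w1 j * ((c0 + c1 * real j) * (\<Sum>b\<le>m2. ?w2 b) + c2 * (\<Sum>b\<le>m2. ?w2 b * real b))"
      by (simp add: sum_distrib_left sum.distrib algebra_simps)
    then show "(\<Sum>b\<le>m2. ?w1 j * ?w2 b * (c0 + c1 * real j + c2 * real b))
      = ?w1 j * (c0 + c1 * real j) + ?w1 j * (c2 * (real m2 * p2))"
      by (simp only: bin_sum1 bin_mean; simp add: algebra_simps)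
  qed
  have "(\<Sum>j\<le>m1. \<Sum>b\<le>m2. ?w1 j * ?w2 b * (c0 + c1 * real j + c2 * real b))
     = c0 * (\<Sum>j\<le>m1. ?w1 j) + c1 * (\<Sum>j\<le>m1. ?w1 j * real j) + (c2 * (real m2 * p2)) * (\<Sum>j\<le>m1. ?w1 j)"
    by (simp only: inner) (simp add: sum.distrib sum_distrib_left algebra_simps)
  then show ?thesis by (simp only: bin_sum1 bin_mean; simp)
qed


lemma re1:
  assumes N: "1 \<le> N 1" and p1: "0 \<le> pr 1" "pr 1 \<le> 1" and p2: "0 \<le> pr 2" "pr 2 \<le> 1"
  shows "(\<Sum>n\<in>nset N 1. pmf (cond_n N pr 1) n * g n) =
    (\<Sum>j\<le>N 1 - 1. \<Sum>b\<le>N 2. real (N 1 - 1 choose j) * pr 1 ^ j * (1 - pr 1) ^ (N 1 - 1 - j)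
        * (real (N 2 choose b) * pr 2 ^ b * (1 - pr 2) ^ (N 2 - b)) * g (Suc j, b))"
proof -
  let ?h = "\<lambda>(j::nat, b::nat). (Suc j, b)"
  have eq: "nset N 1 = ?h ` ({..N 1 - 1} \<times> {..N 2})"
  proof
    show "nset N 1 \<subseteq> ?h ` ({..N 1 - 1} \<times> {..N 2})"
    proof
      fix n assume "n \<in> nset N 1"
      then obtain a b where n: "n = (a, b)" "1 \<le> a" "a \<le> N 1" "b \<le> N 2"
        by (cases n) (auto simp: nset_def comp_def)
      then show "n \<in> ?h ` ({..N 1 - 1} \<times> {..N 2})"
        by (intro image_eqI[of _ _ "(a - 1, b)"]) auto
    qed
  next
    show "?h ` ({..N 1 - 1} \<times> {..N 2}) \<subseteq> nset N 1"
      using N by (auto simp: nset_def comp_def)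
  qed
  have inj: "inj_on ?h ({..N 1 - 1} \<times> {..N 2})" by (auto simp: inj_on_def)
  have "(\<Sum>n\<in>nset N 1. pmf (cond_n N pr 1) n * g n) =
        (\<Sum>z\<in>{..N 1 - 1} \<times> {..N 2}. pmf (cond_n N pr 1) (?h z) * g (?h z))"
    unfolding eq by (subst sum.reindex[OF inj]) (simp add: case_prod_beta)
  also have "\<dots> = (\<Sum>j\<le>N 1 - 1. \<Sum>b\<le>N 2. pmf (cond_n N pr 1) (Suc j, b) * g (Suc j, b))"
    by (subst sum.cartesian_product) (rule sum.cong, auto)
  also have "\<dots> = (\<Sum>j\<le>N 1 - 1. \<Sum>b\<le>N 2. real (N 1 - 1 choose j) * pr 1 ^ j * (1 - pr 1) ^ (N 1 - 1 - j)
        * (real (N 2 choose b) * pr 2 ^ b * (1 - pr 2) ^ (N 2 - b)) * g (Suc j, b))"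
    using p1 p2 by (intro sum.cong refl) (simp add: cond_n_def pmf_pair pmf_map_inj' pmf_binomial[of "pr (Suc 0)"] pmf_binomial[of "pr 2"])
  finally show ?thesis .
qed

lemma re2:
  assumes N: "1 \<le> N 2" and p1: "0 \<le> pr 1" "pr 1 \<le> 1" and p2: "0 \<le> pr 2" "pr 2 \<le> 1"
  shows "(\<Sum>n\<in>nset N 2. pmf (cond_n N pr 2) n * g n) =
    (\<Sum>j\<le>N 2 - 1. \<Sum>b\<le>N 1. real (N 2 - 1 choose j) * pr 2 ^ j * (1 - pr 2) ^ (N 2 - 1 - j)
        * (real (N 1 choose b) * pr 1 ^ b * (1 - pr 1) ^ (N 1 - b)) * g (b, Suc j))"
proof -
  let ?h = "\<lambda>(j::nat, b::nat). (b, Suc j)"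
  have eq: "nset N 2 = ?h ` ({..N 2 - 1} \<times> {..N 1})"
  proof
    show "nset N 2 \<subseteq> ?h ` ({..N 2 - 1} \<times> {..N 1})"
    proof
      fix n assume "n \<in> nset N 2"
      then obtain a b where n: "n = (b, a)" "1 \<le> a" "a \<le> N 2" "b \<le> N 1"
        by (cases n) (auto simp: nset_def comp_def)
      then show "n \<in> ?h ` ({..N 2 - 1} \<times> {..N 1})"
        by (intro image_eqI[of _ _ "(a - 1, b)"]) auto
    qed
  next
    show "?h ` ({..N 2 - 1} \<times> {..N 1}) \<subseteq> nset N 2"
      using N by (auto simp: nset_def comp_def)
  qed
  have inj: "inj_on ?h ({..N 2 - 1} \<times> {..N 1})" by (auto simp: inj_on_def)
  have "(\<Sum>n\<in>nset N 2. pmf (cond_n N pr 2) n * g n) =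
        (\<Sum>z\<in>{..N 2 - 1} \<times> {..N 1}. pmf (cond_n N pr 2) (?h z) * g (?h z))"
    unfolding eq by (subst sum.reindex[OF inj]) (simp add: case_prod_beta)
  also have "\<dots> = (\<Sum>j\<le>N 2 - 1. \<Sum>b\<le>N 1. pmf (cond_n N pr 2) (b, Suc j) * g (b, Suc j))"
    by (subst sum.cartesian_product) (rule sum.cong, auto)
  also have "\<dots> = (\<Sum>j\<le>N 2 - 1. \<Sum>b\<le>N 1. real (N 2 - 1 choose j) * pr 2 ^ j * (1 - pr 2) ^ (N 2 - 1 - j)
        * (real (N 1 choose b) * pr 1 ^ b * (1 - pr 1) ^ (N 1 - b)) * g (b, Suc j))"
    using p1 p2 by (intro sum.cong refl) (simp add: cond_n_def pmf_pair pmf_map_inj' pmf_binomial[of "pr (Suc 0)"] pmf_binomial[of "pr 2"])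
  finally show ?thesis .
qed

lemma bhat1:
  assumes N: "1 \<le> N 1"
  shows "Bhat dT N P pr 1 =
    (\<Sum>j\<le>N 1 - 1. \<Sum>b\<le>N 2. real (N 1 - 1 choose j) * pr 1 ^ j * (1 - pr 1) ^ (N 1 - 1 - j)
        * (real (N 2 choose b) * pr 2 ^ b * (1 - pr 2) ^ (N 2 - b)) * B1 dT P 1 (Suc j, b))"
proof -
  have e: "{1..N 1} = {Suc 0..Suc (N 1 - 1)}" using N by simp
  show ?thesis unfolding Bhat_def e sum.shift_bounds_cl_Suc_ivl
    by (simp add: oth_def mkp_def atLeast0AtMost mult.assoc)
qed

lemma bhat2:
  assumes N: "1 \<le> N 2"
  shows "Bhat dT N P pr 2 =
    (\<Sum>j\<le>N 2 - 1. \<Sum>b\<le>N 1. real (N 2 - 1 choose j) * pr 2 ^ j * (1 - pr 2) ^ (N 2 - 1 - j)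
        * (real (N 1 choose b) * pr 1 ^ b * (1 - pr 1) ^ (N 1 - b)) * B1 dT P 2 (b, Suc j))"
proof -
  have e: "{1..N 2} = {Suc 0..Suc (N 2 - 1)}" using N by simp
  show ?thesis unfolding Bhat_def e sum.shift_bounds_cl_Suc_ivl
    by (simp add: oth_def mkp_def atLeast0AtMost mult.assoc)
qed


lemma case1:
  fixes N :: "nat \<Rightarrow> nat" and lam mu al be pr :: "nat \<Rightarrow> real"
    and dT ps q pi' :: real
    and P :: "nat \<times> nat \<Rightarrow> nat \<times> nat \<Rightarrow> real"
  assumes Npos: "1 \<le> N 1"
    and pos: "0 < lam 1" "0 < mu 1" "0 < lam 2" "0 < mu 2"
    and p1: "0 \<le> pr 1" "pr 1 \<le> 1" and p2: "0 \<le> pr 2" "pr 2 \<le> 1"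
    and steady: "\<forall>n. stationary lam mu n (P n)"
  shows "Uk dT N al be P pr pi' 1 =
           pi' * dT * (lam 1 / (lam 1 + mu 1)) *
             (al 1 - be 1 * (1 + lam 1 * (real (N 1) - 1) / (lam 1 + mu 1) * pr 1
                               + lam 2 * real (N 2) / (lam 2 + mu 2) * pr 2))
       \<and> Ck dT N P ps q pr pi' 1 = pi' * (ps + q * Bhat dT N P pr 1)"
proof
  define r1 where "r1 = lam 1 / (lam 1 + mu 1)"
  define c0 where "c0 = dT * r1 * (al 1 - be 1)"
  define c1 where "c1 = - (dT * r1 * be 1 * lam 1 / (lam 1 + mu 1))"
  define c2 where "c2 = - (dT * r1 * be 1 * lam 2 / (lam 2 + mu 2))"
  have V: "V1 dT al be P 1 (Suc j, b) = c0 + c1 * real j + c2 * real b" for j b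
    using V1_1[where n="(Suc j, b)" and dT=dT and al=al and be=be and P=P, OF steady[rule_format] pos]
    unfolding r1_def[symmetric] by (simp add: c0_def c1_def c2_def algebra_simps)
  have "(\<Sum>n\<in>nset N 1. pmf (cond_n N pr 1) n * V1 dT al be P 1 n)
     = c0 + c1 * (real (N 1 - 1) * pr 1) + c2 * (real (N 2) * pr 2)"
    unfolding re1[where N=N and pr=pr, OF Npos p1 p2] V by (rule bin_lin)
  note S = this
  show "Uk dT N al be P pr pi' 1 =
           pi' * dT * (lam 1 / (lam 1 + mu 1)) *
             (al 1 - be 1 * (1 + lam 1 * (real (N 1) - 1) / (lam 1 + mu 1) * pr 1
                               + lam 2 * real (N 2) / (lam 2 + mu 2) * pr 2))"
    using Npos unfolding Uk_def S r1_def[symmetric] c0_def c1_def c2_def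
    by (simp add: of_nat_diff algebra_simps)
  have "(\<Sum>n\<in>nset N 1. pmf (cond_n N pr 1) n * q * B1 dT P 1 n)
      = q * (\<Sum>n\<in>nset N 1. pmf (cond_n N pr 1) n * B1 dT P 1 n)"
    by (simp add: sum_distrib_left algebra_simps)
  also have "\<dots> = q * Bhat dT N P pr 1"
    unfolding re1[where N=N and pr=pr, OF Npos p1 p2] bhat1[where N=N and dT=dT and P=P and pr=pr, OF Npos] ..
  finally show "Ck dT N P ps q pr pi' 1 = pi' * (ps + q * Bhat dT N P pr 1)"
    unfolding Ck_def by simp
qed

lemma case2:
  fixes N :: "nat \<Rightarrow> nat" and lam mu al be pr :: "nat \<Rightarrow> real"
    and dT ps q pi' :: real
    and P :: "nat \<times> nat \<Rightarrow> nat \<times> nat \<Rightarrow> real"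
  assumes Npos: "1 \<le> N 2"
    and pos: "0 < lam 1" "0 < mu 1" "0 < lam 2" "0 < mu 2"
    and p1: "0 \<le> pr 1" "pr 1 \<le> 1" and p2: "0 \<le> pr 2" "pr 2 \<le> 1"
    and steady: "\<forall>n. stationary lam mu n (P n)"
  shows "Uk dT N al be P pr pi' 2 =
           pi' * dT * (lam 2 / (lam 2 + mu 2)) *
             (al 2 - be 2 * (1 + lam 2 * (real (N 2) - 1) / (lam 2 + mu 2) * pr 2
                               + lam 1 * real (N 1) / (lam 1 + mu 1) * pr 1))
       \<and> Ck dT N P ps q pr pi' 2 = pi' * (ps + q * Bhat dT N P pr 2)"
proof
  define r2 where "r2 = lam 2 / (lam 2 + mu 2)"
  define c0 where "c0 = dT * r2 * (al 2 - be 2)"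
  define c1 where "c1 = - (dT * r2 * be 2 * lam 2 / (lam 2 + mu 2))"
  define c2 where "c2 = - (dT * r2 * be 2 * lam 1 / (lam 1 + mu 1))"
  have V: "V1 dT al be P 2 (b, Suc j) = c0 + c1 * real j + c2 * real b" for j b
    using V1_2[where n="(b, Suc j)" and dT=dT and al=al and be=be and P=P, OF steady[rule_format] pos]
    unfolding r2_def[symmetric] by (simp add: c0_def c1_def c2_def algebra_simps)
  have "(\<Sum>n\<in>nset N 2. pmf (cond_n N pr 2) n * V1 dT al be P 2 n)
     = c0 + c1 * (real (N 2 - 1) * pr 2) + c2 * (real (N 1) * pr 1)"
    unfolding re2[where N=N and pr=pr, OF Npos p1 p2] V by (rule bin_lin)
  note S = this
  show "Uk dT N al be P pr pi' 2 =
           pi' * dT * (lam 2 / (lam 2 + mu 2)) *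
             (al 2 - be 2 * (1 + lam 2 * (real (N 2) - 1) / (lam 2 + mu 2) * pr 2
                               + lam 1 * real (N 1) / (lam 1 + mu 1) * pr 1))"
    using Npos unfolding Uk_def S r2_def[symmetric] c0_def c1_def c2_def
    by (simp add: of_nat_diff algebra_simps)
  have "(\<Sum>n\<in>nset N 2. pmf (cond_n N pr 2) n * q * B1 dT P 2 n)
      = q * (\<Sum>n\<in>nset N 2. pmf (cond_n N pr 2) n * B1 dT P 2 n)"
    by (simp add: sum_distrib_left algebra_simps)
  also have "\<dots> = q * Bhat dT N P pr 2"
    unfolding re2[where N=N and pr=pr, OF Npos p1 p2] bhat2[where N=N and dT=dT and P=P and pr=pr, OF Npos] ..
  finally show "Ck dT N P ps q pr pi' 2 = pi' * (ps + q * Bhat dT N P pr 2)"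
    unfolding Ck_def by simp
qed

theorem lemma2:
  fixes N :: "nat \<Rightarrow> nat" and lam mu al be pr :: "nat \<Rightarrow> real"
    and dT ps q pi' :: real and k :: nat
    and P :: "nat \<times> nat \<Rightarrow> nat \<times> nat \<Rightarrow> real"
  assumes k: "k \<in> {1, 2}"
    and Npos: "1 \<le> N k"
    and rates: "\<forall>j\<in>{1,2::nat}. 0 < lam j \<and> 0 < mu j"
    and probs: "\<forall>j\<in>{1,2::nat}. 0 \<le> pr j \<and> pr j \<le> 1"
    and pi': "0 \<le> pi' \<and> pi' \<le> 1"
    and prices: "0 \<le> ps" "0 \<le> q"
    and steady: "\<forall>n. stationary lam mu n (P n)"
  shows "Uk dT N al be P pr pi' k =
           pi' * dT * (lam k / (lam k + mu k)) *
             (al k - be k * (1 + lam k * (real (N k) - 1) / (lam k + mu k) * pr k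
                               + lam (oth k) * real (N (oth k)) / (lam (oth k) + mu (oth k)) * pr (oth k)))
       \<and> Ck dT N P ps q pr pi' k = pi' * (ps + q * Bhat dT N P pr k)"
proof -
  have pos: "0 < lam 1" "0 < mu 1" "0 < lam 2" "0 < mu 2" using rates by auto
  have p1: "0 \<le> pr 1" "pr 1 \<le> 1" and p2: "0 \<le> pr 2" "pr 2 \<le> 1" using probs by auto
  from k show ?thesis
  proof
    assume k1: "k = 1"
    have o: "oth k = 2" by (simp add: k1 oth_def)
    show ?thesis unfolding o unfolding k1
      using case1[where N=N and lam=lam and mu=mu and pr=pr and P=P and dT=dT and al=al and be=be and pi'=pi' and ps=ps and q=q, OF Npos[unfolded k1] pos p1 p2 steady] .
  next
    assume "k \<in> {2}" then have k2: "k = 2" by simp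
    have o: "oth k = 1" by (simp add: k2 oth_def)
    show ?thesis unfolding o unfolding k2
      using case2[where N=N and lam=lam and mu=mu and pr=pr and P=P and dT=dT and al=al and be=be and pi'=pi' and ps=ps and q=q, OF Npos[unfolded k2] pos p1 p2 steady] .
  qed
qed

end
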